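(* Let $n\ge 3$ and let $\mathcal{B}$ be the set of bases of any rank-$3$ matroid on the ground set $\mathbb{Z}_n$ invariant under the translation action of $\mathbb{Z}_n$ (equivalently, corresponding to a three-dimensional tropical subrepresentation of $\mathbb{B}[\mathbb{Z}_n]$). Then for every unit $u\in\mathbb{Z}_n^\times$, $f_{u,2u}=\{\{a,a+u,a+2u\}\mid a\in\mathbb{Z}_n\}\subseteq\mathcal{B}$.
   Context: $\mathbb{Z}_n$ acts on $\binom{\mathbb{Z}_n}{3}$ by $x\cdot\{a,b,c\}=\{x+a,x+b,x+c\}$. For $i,j\in\mathbb{Z}_n$ with $0,i,j$ pairwise distinct, $f_{i,j}=\{\{a,a+i,a+j\}\mid a\in\mathbb{Z}_n\}$. $\mathbb{Z}_n^\times$ denotes the units of $\mathbb{Z}_n$. *)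

theory Defs
  imports Main
begin

text \<open>Z_n is modelled as {0..<n} :: nat set, with addition mod n.\<close>

definition Zn :: "nat \<Rightarrow> nat set" where
  "Zn n = {0..<n}"

definition matroid_bases :: "'a set \<Rightarrow> 'a set set \<Rightarrow> bool" where
  "matroid_bases E \<B> \<longleftrightarrow>
     \<B> \<noteq> {} \<and> (\<forall>B\<in>\<B>. B \<subseteq> E) \<and>
     (\<forall>B1\<in>\<B>. \<forall>B2\<in>\<B>. \<forall>x\<in>B1 - B2. \<exists>y\<in>B2 - B1. insert y (B1 - {x}) \<in> \<B>)"

definition rank_matroid_bases :: "'a set \<Rightarrow> 'a set set \<Rightarrow> nat \<Rightarrow> bool" where
  "rank_matroid_bases E \<B> r \<longleftrightarrow> matroid_bases E \<B> \<and> (\<forall>B\<in>\<B>. card B = r)"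

definition translate :: "nat \<Rightarrow> nat \<Rightarrow> nat set \<Rightarrow> nat set" where
  "translate n x B = (\<lambda>b. (x + b) mod n) ` B"

definition translation_invariant :: "nat \<Rightarrow> nat set set \<Rightarrow> bool" where
  "translation_invariant n \<B> \<longleftrightarrow> (\<forall>x\<in>Zn n. \<forall>B\<in>\<B>. translate n x B \<in> \<B>)"

definition units_Zn :: "nat \<Rightarrow> nat set" where
  "units_Zn n = {u\<in>Zn n. coprime u n}"

definition f_orbit :: "nat \<Rightarrow> nat \<Rightarrow> nat \<Rightarrow> nat set set" where
  "f_orbit n i j = {{a, (a + i) mod n, (a + j) mod n} | a. a \<in> Zn n}"

end

theory Submission
  imports Defs "HOL-Number_Theory.Cong"
begin

lemma ext_basis:
  assumes mb: "matroid_bases E BB" and fin: "\<forall>X\<in>BB. finite X"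
  shows "B1 \<in> BB \<Longrightarrow> I \<subseteq> B1 \<Longrightarrow> B \<in> BB \<Longrightarrow> \<exists>B'\<in>BB. I \<subseteq> B' \<and> B' \<subseteq> I \<union> B"
proof (induction "card (B1 - (I \<union> B))" arbitrary: B1 rule: less_induct)
  case less
  show ?case
  proof (cases "B1 \<subseteq> I \<union> B")
    case True thus ?thesis using less.prems by blast
  next
    case False
    then obtain z where z: "z \<in> B1" "z \<notin> I" "z \<notin> B" by blast
    from mb have ex: "\<forall>B1\<in>BB. \<forall>B2\<in>BB. \<forall>x\<in>B1 - B2. \<exists>y\<in>B2 - B1. insert y (B1 - {x}) \<in> BB"
      unfolding matroid_bases_def by blast
    then obtain y where y: "y \<in> B - B1" "insert y (B1 - {z}) \<in> BB" using z less.prems by blast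
    let ?B2 = "insert y (B1 - {z})"
    have eq: "?B2 - (I \<union> B) = B1 - (I \<union> B) - {z}" using y z by auto
    have "finite (B1 - (I \<union> B))" using fin less.prems by auto
    hence "card (?B2 - (I \<union> B)) < card (B1 - (I \<union> B))" unfolding eq
      using z by (intro card_Diff1_less) auto
    moreover have "I \<subseteq> ?B2" using less.prems z by auto
    ultimately show ?thesis using less.hyps y less.prems by blast
  qed
qed

lemma orbit:
  fixes n u a :: nat
  assumes "coprime u n" "a < n" "a \<in> S" "\<forall>y<n. y \<in> S \<longrightarrow> (y + u) mod n \<in> S" "z < n"
  shows "z \<in> S"
proof -
  have all: "(a + i * u) mod n \<in> S" for i
  proof (induction i)
    case 0 then show ?case using assms by simp
  next
    case (Suc i)
    have "(a + Suc i * u) mod n = ((a + i * u) mod n + u) mod n"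
      by (simp add: mod_simps ac_simps)
    then show ?case using Suc assms(4) by (metis mod_less_divisor assms(2) gr_implies_not0 neq0_conv)
  qed
  obtain v where v: "[u * v = Suc 0] (mod n)" using cong_solve_coprime_nat[OF assms(1)] by blast
  have e1: "((z + n - a) * v) * u = (z + n - a) * (u * v)" by (simp add: ac_simps)
  have "(a + ((z + n - a) * v) * u) mod n = (a + (z + n - a) * ((u * v) mod n)) mod n"
    unfolding e1 by (metis mod_add_right_eq mod_mult_right_eq)
  also have "\<dots> = (a + (z + n - a) * (Suc 0 mod n)) mod n" using v by (simp add: cong_def)
  also have "\<dots> = (a + (z + n - a)) mod n" by (simp add: mod_simps)
  also have "\<dots> = z" using assms by simp
  finally show ?thesis using all by metis
qed

lemma card3_le: "card {a, b, c :: 'x} \<le> 3"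
  by (simp add: card_insert_if)

theorem mainTheorem14:
  fixes n :: nat and \<B> :: "nat set set"
  assumes "n \<ge> 3"
    and "rank_matroid_bases (Zn n) \<B> 3"
    and "translation_invariant n \<B>"
    and "u \<in> units_Zn n"
  shows "f_orbit n u ((2 * u) mod n) \<subseteq> \<B>"
proof -
  have mb: "matroid_bases (Zn n) \<B>" and c3: "\<forall>B\<in>\<B>. card B = 3"
    using assms(2) unfolding rank_matroid_bases_def by auto
  have fin: "\<forall>X\<in>\<B>. finite X" using c3 by (metis card.infinite zero_neq_numeral)
  have sub: "\<forall>B\<in>\<B>. \<forall>x\<in>B. x < n" using mb unfolding matroid_bases_def Zn_def by fastforce
  have ne: "\<B> \<noteq> {}" using mb unfolding matroid_bases_def by auto
  have cop: "coprime u n" and un: "u < n" using assms(4) unfolding units_Zn_def Zn_def by auto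
  have u0: "u \<noteq> 0"
  proof
    assume "u = 0"
    with cop have "n = 1" by simp
    with assms(1) show False by simp
  qed
  have tr: "\<And>X x. X \<in> \<B> \<Longrightarrow> x < n \<Longrightarrow> translate n x X \<in> \<B>"
    using assms(3) unfolding translation_invariant_def Zn_def by auto
  define s where "s = (\<lambda>y. (y + u) mod n)"
  have s_lt: "\<And>y. s y < n" using assms(1) unfolding s_def by simp
  have s_ne: "\<And>y. y < n \<Longrightarrow> s y \<noteq> y"
  proof -
    fix y assume y: "y < n"
    show "s y \<noteq> y"
    proof (cases "y + u < n")
      case True then show ?thesis using u0 unfolding s_def by simp
    next
      case False
      then have "(y + u) mod n = y + u - n" using y un by (simp add: mod_if)
      then show ?thesis using un False unfolding s_def by simp
    qed
  qed
  have ts: "\<And>x y. (x + s y) mod n = s ((x + y) mod n)"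
    unfolding s_def by (simp add: mod_simps add.assoc)
  have shift: "\<And>y y'. y < n \<Longrightarrow> y' < n \<Longrightarrow> ((y' + n - y) mod n + y) mod n = y'"
    by (simp add: mod_simps)
  have tim: "\<And>x X b. b \<in> X \<Longrightarrow> (x + b) mod n \<in> translate n x X"
    unfolding translate_def by auto
  have single: "\<And>y. y < n \<Longrightarrow> \<exists>B\<in>\<B>. y \<in> B"
  proof -
    fix y assume y: "y < n"
    obtain B0 where B0: "B0 \<in> \<B>" using ne by auto
    then have "B0 \<noteq> {}" using c3 by auto
    then obtain p where p: "p \<in> B0" by auto
    have "((y + n - p) mod n + p) mod n \<in> translate n ((y + n - p) mod n) B0" using tim p by blast
    moreover have "((y + n - p) mod n + p) mod n = y" using shift y sub B0 p by blast
    moreover have "translate n ((y + n - p) mod n) B0 \<in> \<B>" using tr B0 assms(1) by simp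
    ultimately show "\<exists>B\<in>\<B>. y \<in> B" by metis
  qed
  have extb: "\<And>B1 I B. B1 \<in> \<B> \<Longrightarrow> I \<subseteq> B1 \<Longrightarrow> B \<in> \<B> \<Longrightarrow> \<exists>B'\<in>\<B>. I \<subseteq> B' \<and> B' \<subseteq> I \<union> B"
    using ext_basis[OF mb fin] by blast
  have pair0: "\<exists>B\<in>\<B>. {0, s 0} \<subseteq> B"
  proof (rule ccontr)
    assume np: "\<not> ?thesis"
    have noP: "\<And>y B. y < n \<Longrightarrow> B \<in> \<B> \<Longrightarrow> \<not> {y, s y} \<subseteq> B"
    proof
      fix y B assume y: "y < n" and B: "B \<in> \<B>" and yy: "{y, s y} \<subseteq> B"
      let ?x = "(0 + n - y) mod n"
      have "(?x + y) mod n = 0" using shift[of y 0] y assms(1) by simp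
      hence e2: "(?x + s y) mod n = s 0" using ts[of ?x y] by simp
      have "(?x + y) mod n \<in> translate n ?x B" "(?x + s y) mod n \<in> translate n ?x B"
        using tim yy by auto
      hence "{0, s 0} \<subseteq> translate n ?x B" using e2 \<open>(?x + y) mod n = 0\<close> by simp
      moreover have "translate n ?x B \<in> \<B>" using tr B assms(1) by simp
      ultimately show False using np by blast
    qed
    obtain B0 where B0: "B0 \<in> \<B>" using ne by auto
    have "card B0 = 3" using c3 B0 by simp
    then obtain p q r where "B0 = {p, q, r}" "p \<noteq> q" unfolding card_3_iff by blast
    then have pq: "p \<in> B0" "q \<in> B0" "p \<noteq> q" by auto
    define Q where "Q = {y. y \<noteq> q \<and> (\<exists>B\<in>\<B>. {y, q} \<subseteq> B)}"
    have pQ: "p \<in> Q" using pq B0 unfolding Q_def by auto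
    have clos: "\<forall>y<n. y \<in> Q \<longrightarrow> (y + u) mod n \<in> Q"
    proof (intro allI impI)
      fix y assume y: "y < n" "y \<in> Q"
      then obtain BJ where BJ: "BJ \<in> \<B>" "{y, q} \<subseteq> BJ" and yq: "y \<noteq> q" unfolding Q_def by auto
      have sq: "s y \<noteq> q" using noP[OF y(1) BJ(1)] BJ by auto
      obtain B1 where B1: "B1 \<in> \<B>" "s y \<in> B1" using single s_lt by blast
      obtain B' where B': "B' \<in> \<B>" "{s y} \<subseteq> B'" "B' \<subseteq> {s y} \<union> BJ"
        using extb[OF B1(1) _ BJ(1), of "{s y}"] B1 by auto
      have "q \<in> B'"
      proof (rule ccontr)
        assume qn: "q \<notin> B'"
        have "y \<notin> B'" using noP[OF y(1) B'(1)] B' by auto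
        hence "B' \<subseteq> insert (s y) (BJ - {y, q})" using B' qn by auto
        have "card (BJ - {y, q}) = 1" using BJ c3 fin yq by (simp add: card_Diff_subset)
        have "card B' \<le> card (insert (s y) (BJ - {y, q}))"
          by (rule card_mono) (use fin BJ \<open>B' \<subseteq> insert (s y) (BJ - {y, q})\<close> in auto)
        also have "\<dots> \<le> Suc (card (BJ - {y, q}))" using fin BJ by (simp add: card_insert_if)
        finally have "card B' \<le> 2" using \<open>card (BJ - {y, q}) = 1\<close> by simp
        then show False using c3 B' by simp
      qed
      then have "{s y, q} \<subseteq> B'" using B' by auto
      then show "(y + u) mod n \<in> Q" using sq B' unfolding Q_def s_def by auto
    qed
    have "q \<in> Q" using orbit[OF cop _ pQ clos] sub B0 pq by blast
    then show False unfolding Q_def by simp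
  qed
  have pair: "\<And>y. y < n \<Longrightarrow> \<exists>B\<in>\<B>. {y, s y} \<subseteq> B"
  proof -
    fix y assume y: "y < n"
    obtain B where B: "B \<in> \<B>" "{0, s 0} \<subseteq> B" using pair0 by auto
    have "(y + 0) mod n \<in> translate n y B" "(y + s 0) mod n \<in> translate n y B"
      using tim[of 0 B y] tim[of "s 0" B y] B by auto
    hence "{(y + 0) mod n, (y + s 0) mod n} \<subseteq> translate n y B" by simp
    moreover have "(y + s 0) mod n = s y" using ts y by simp
    moreover have "(y + 0) mod n = y" using y by simp
    moreover have "translate n y B \<in> \<B>" using tr B y by simp
    ultimately show "\<exists>B\<in>\<B>. {y, s y} \<subseteq> B" by auto
  qed
  define S where "S = (\<lambda>y. {y, s y, s (s y)})"
  have forb: "f_orbit n u ((2 * u) mod n) = S ` {0..<n}"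
  proof -
    have "\<And>a. (a + (2 * u) mod n) mod n = s (s a)"
      unfolding s_def by (simp add: mod_simps add.assoc mult_2)
    then show ?thesis unfolding f_orbit_def S_def Zn_def s_def by auto
  qed
  have trS: "\<And>x y. translate n x (S y) = S ((x + y) mod n)"
    unfolding translate_def S_def using ts by auto
  show ?thesis
  proof (rule ccontr)
    assume nt: "\<not> ?thesis"
    have "\<not> S ` {0..<n} \<subseteq> \<B>" using nt forb by simp
    then obtain a where a: "a < n" "S a \<notin> \<B>" by (meson atLeastLessThan_iff image_subsetI)
    have noS: "\<And>y. y < n \<Longrightarrow> S y \<notin> \<B>"
    proof
      fix y assume y: "y < n" "S y \<in> \<B>"
      have "translate n ((a + n - y) mod n) (S y) \<in> \<B>" using tr y assms(1) by simp
      moreover have "translate n ((a + n - y) mod n) (S y) = S a"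
        using trS[of "(a + n - y) mod n" y] shift[OF y(1) a(1)] by simp
      ultimately show False using a by simp
    qed
    obtain B0 where B0: "B0 \<in> \<B>" using ne by auto
    obtain Bp where Bp: "Bp \<in> \<B>" "{0, s 0} \<subseteq> Bp" using pair0 by auto
    obtain B' where B': "B' \<in> \<B>" "{0, s 0} \<subseteq> B'" "B' \<subseteq> {0, s 0} \<union> B0"
      using extb[OF Bp(1) Bp(2) B0] by auto
    have "B' - {0, s 0} \<noteq> {}"
    proof
      assume "B' - {0, s 0} = {}"
      hence "B' \<subseteq> {0, s 0}" by auto
      hence "card B' \<le> card {0, s 0}" by (intro card_mono) auto
      also have "\<dots> \<le> 2" by (simp add: card_insert_if)
      finally show False using c3 B' by simp
    qed
    then obtain q where q: "q \<in> B'" "q \<notin> {0, s 0}" by auto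
    have q3: "card {0, s 0, q} = 3" using q s_ne[of 0] assms(1) by auto
    have "{0, s 0, q} = B'"
      using q B' c3 fin q3 by (intro card_seteq) auto
    hence "B' = {0, s 0, q}" by simp
    hence T0: "{0, s 0, q} \<in> \<B>" using B' by simp
    have qn: "q < n" using sub q B' by blast
    define T where "T = {y. {y, s y, q} \<in> \<B>}"
    have clos: "\<forall>y<n. y \<in> T \<longrightarrow> (y + u) mod n \<in> T"
    proof (intro allI impI)
      fix y assume y: "y < n" "y \<in> T"
      hence Bj: "{y, s y, q} \<in> \<B>" unfolding T_def by simp
      obtain Bq where Bq: "Bq \<in> \<B>" "{s y, s (s y)} \<subseteq> Bq" using pair s_lt by blast
      obtain C where C: "C \<in> \<B>" "{s y, s (s y)} \<subseteq> C" "C \<subseteq> {s y, s (s y)} \<union> {y, s y, q}"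
        using extb[OF Bq(1) Bq(2) Bj] by auto
      have notsub: "\<not> C \<subseteq> S y"
      proof
        assume "C \<subseteq> S y"
        moreover have "card (S y) \<le> card C" using C c3 card3_le unfolding S_def by auto
        ultimately have "C = S y" by (intro card_seteq) (auto simp: S_def)
        thus False using noS y C by simp
      qed
      have qS: "q \<notin> S y" using C notsub unfolding S_def by auto
      have qC: "q \<in> C" using C notsub unfolding S_def by auto
      have "card {s y, s (s y), q} = 3" using qS s_ne[OF s_lt[of y]] unfolding S_def by auto
      hence "{s y, s (s y), q} = C" using C qC c3 fin by (intro card_seteq) auto
      hence "C = {s y, s (s y), q}" by simp
      then show "(y + u) mod n \<in> T" using C unfolding T_def s_def by simp
    qed
    define y where "y = (q + n - u) mod n"
    have yn: "y < n" using assms(1) unfolding y_def by simp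
    have "y \<in> T" using orbit[OF cop _ _ clos yn, of 0] T0 assms(1) unfolding T_def by auto
    moreover have "s y = q" unfolding s_def y_def using un qn by (simp add: mod_simps)
    ultimately have "{y, q} \<in> \<B>" unfolding T_def by simp
    then have "card {y, q} = 3" using c3 by blast
    moreover have "card {y, q} \<le> 2" by (simp add: card_insert_if)
    ultimately show False by simp
  qed
qed

end
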